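(* Let $X$ be a topological group with identity $e$, equipped with a proper length function $\ell:X\to[0,\infty)$. Let $\mathcal H$ be a Hilbert space, let $U:X\to\mathcal U(\mathcal H)$ be a unitary representation of $X$, and let $\{x_j\}_{j\in J}$ be a net in $X$ with $x_j\to\infty$. Assume there exists a self-adjoint operator $A$ in $\mathcal H$ such that $U(x_j)\in C^1(A)$ for each $j\in J$, and suppose that the strong limit $$D:=\operatorname{s-lim}_j\frac{1}{\ell(x_j)}[A,U(x_j)]U(x_j)^{-1}$$ exists. Then: (a) $\lim_j\langle\varphi,U(x_j)\psi\rangle=0$ for all $\varphi\in\ker(D)^\perp$ and $\psi\in\mathcal H$; (b) $U$ has no nontrivial finite-dimensional unitary subrepresentation in $\ker(D)^\perp$, i.e. there is no nonzero finite-dimensional subspace of $\ker(D)^\perp$ invariant under all $U(x)$, $x\in X$.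
   Context: $\mathcal U(\mathcal H)$ is the group of unitary operators on $\mathcal H$; the scalar product is antilinear in the first argument. A proper length function is a map $\ell:X\to[0,\infty)$ with: (L1) $\ell(e)=0$; (L2) $\ell(x^{-1})=\ell(x)$ for all $x$; (L3) $\ell(xy)\le\ell(x)+\ell(y)$ for all $x,y$; (L4) for every compact $K\subset[0,\infty)$, $\ell^{-1}(K)$ is relatively compact in $X$. A net $\{x_j\}$ in $X$ diverges to infinity ($x_j\to\infty$) if it has no limit (cluster) point in $X$. For a self-adjoint operator $A$ and bounded $S$, $S\in C^1(A)$ means $t\mapsto e^{-itA}Se^{itA}$ is strongly $C^1$; equivalently the form $\mathrm{dom}(A)\ni\varphi\mapsto\langle A\varphi,S\varphi\rangle-\langle\varphi,SA\varphi\rangle$ is continuous for the topology of $\mathcal H$, and $[A,S]$ denotes the bounded operator associated with its continuous extension. *)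

theory Defs
  imports "HOL-Analysis.Analysis" "HOL-Algebra.Group"
begin

text \<open>A complex Hilbert space is modelled as a real Banach space type 'h together with a
complex scalar multiplication sc (extending the real one) and a complex inner product ip,
antilinear in the first argument, whose associated norm is the norm of 'h.
Completeness comes from the class banach.\<close>

definition complex_hilbert :: "(complex \<Rightarrow> 'h::banach \<Rightarrow> 'h) \<Rightarrow> ('h \<Rightarrow> 'h \<Rightarrow> complex) \<Rightarrow> bool" where
  "complex_hilbert sc ip \<longleftrightarrow>
     (\<forall>x. sc 1 x = x) \<and>
     (\<forall>a b x. sc a (sc b x) = sc (a * b) x) \<and>
     (\<forall>a x y. sc a (x + y) = sc a x + sc a y) \<and>
     (\<forall>a b x. sc (a + b) x = sc a x + sc b x) \<and>
     (\<forall>r x. sc (complex_of_real r) x = r *\<^sub>R x) \<and>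
     (\<forall>x y z. ip x (y + z) = ip x y + ip x z) \<and>
     (\<forall>a x y. ip x (sc a y) = a * ip x y) \<and>
     (\<forall>x y. ip y x = cnj (ip x y)) \<and>
     (\<forall>x. ip x x = complex_of_real ((norm x)\<^sup>2))"

definition bounded_op :: "(complex \<Rightarrow> 'h::banach \<Rightarrow> 'h) \<Rightarrow> ('h \<Rightarrow> 'h) \<Rightarrow> bool" where
  "bounded_op sc T \<longleftrightarrow>
     (\<forall>x y. T (x + y) = T x + T y) \<and> (\<forall>a x. T (sc a x) = sc a (T x)) \<and>
     (\<exists>C. \<forall>x. norm (T x) \<le> C * norm x)"

definition unitary_op :: "(complex \<Rightarrow> 'h::banach \<Rightarrow> 'h) \<Rightarrow> ('h \<Rightarrow> 'h \<Rightarrow> complex) \<Rightarrow> ('h \<Rightarrow> 'h) \<Rightarrow> bool" where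
  "unitary_op sc ip T \<longleftrightarrow> bounded_op sc T \<and> surj T \<and> (\<forall>x y. ip (T x) (T y) = ip x y)"

text \<open>Self-adjoint (possibly unbounded) operator A with domain DA: DA is a dense complex
subspace, A is linear on DA, and A equals its adjoint A*.\<close>

definition self_adjoint :: "(complex \<Rightarrow> 'h::banach \<Rightarrow> 'h) \<Rightarrow> ('h \<Rightarrow> 'h \<Rightarrow> complex) \<Rightarrow> 'h set \<Rightarrow> ('h \<Rightarrow> 'h) \<Rightarrow> bool" where
  "self_adjoint sc ip DA A \<longleftrightarrow>
     0 \<in> DA \<and> (\<forall>x\<in>DA. \<forall>y\<in>DA. x + y \<in> DA) \<and> (\<forall>a. \<forall>x\<in>DA. sc a x \<in> DA) \<and>
     closure DA = UNIV \<and>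
     (\<forall>x\<in>DA. \<forall>y\<in>DA. A (x + y) = A x + A y) \<and> (\<forall>a. \<forall>x\<in>DA. A (sc a x) = sc a (A x)) \<and>
     (\<forall>y. y \<in> DA \<longleftrightarrow> (\<exists>z. \<forall>x\<in>DA. ip (A x) y = ip x z)) \<and>
     (\<forall>x\<in>DA. \<forall>y\<in>DA. ip (A x) y = ip x (A y))"

text \<open>S \<in> C^1(A): the form phi |-> <A phi, S phi> - <phi, S A phi> on dom(A) is continuous
for the topology of H, i.e. bounded by c * norm(phi)^2.\<close>

definition in_C1 :: "(complex \<Rightarrow> 'h::banach \<Rightarrow> 'h) \<Rightarrow> ('h \<Rightarrow> 'h \<Rightarrow> complex) \<Rightarrow> 'h set \<Rightarrow> ('h \<Rightarrow> 'h) \<Rightarrow> ('h \<Rightarrow> 'h) \<Rightarrow> bool" where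
  "in_C1 sc ip DA A S \<longleftrightarrow> bounded_op sc S \<and>
     (\<exists>c. \<forall>\<phi>\<in>DA. cmod (ip (A \<phi>) (S \<phi>) - ip \<phi> (S (A \<phi>))) \<le> c * (norm \<phi>)\<^sup>2)"

text \<open>[A,S]: the bounded operator associated with the continuous extension of that form.\<close>

definition commutator :: "(complex \<Rightarrow> 'h::banach \<Rightarrow> 'h) \<Rightarrow> ('h \<Rightarrow> 'h \<Rightarrow> complex) \<Rightarrow> 'h set \<Rightarrow> ('h \<Rightarrow> 'h) \<Rightarrow> ('h \<Rightarrow> 'h) \<Rightarrow> ('h \<Rightarrow> 'h)" where
  "commutator sc ip DA A S = (THE B. bounded_op sc B \<and>
     (\<forall>\<phi>\<in>DA. ip \<phi> (B \<phi>) = ip (A \<phi>) (S \<phi>) - ip \<phi> (S (A \<phi>))))"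

definition kernel_perp :: "('h \<Rightarrow> 'h \<Rightarrow> complex) \<Rightarrow> ('h::banach \<Rightarrow> 'h) \<Rightarrow> 'h set" where
  "kernel_perp ip D = {\<phi>. \<forall>v. D v = 0 \<longrightarrow> ip v \<phi> = 0}"

definition cspan :: "(complex \<Rightarrow> 'h::banach \<Rightarrow> 'h) \<Rightarrow> 'h set \<Rightarrow> 'h set" where
  "cspan sc B = {y. \<exists>f. y = (\<Sum>b\<in>B. sc (f b) b)}"

definition topological_group :: "('g, 'b) monoid_scheme \<Rightarrow> 'g topology \<Rightarrow> bool" where
  "topological_group G T \<longleftrightarrow> group G \<and> topspace T = carrier G \<and>
     continuous_map (prod_topology T T) T (\<lambda>(x, y). x \<otimes>\<^bsub>G\<^esub> y) \<and>
     continuous_map T T (m_inv G)"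

definition proper_length :: "('g, 'b) monoid_scheme \<Rightarrow> 'g topology \<Rightarrow> ('g \<Rightarrow> real) \<Rightarrow> bool" where
  "proper_length G T len \<longleftrightarrow>
     (\<forall>x\<in>carrier G. len x \<ge> 0) \<and>
     len \<one>\<^bsub>G\<^esub> = 0 \<and>
     (\<forall>x\<in>carrier G. len (m_inv G x) = len x) \<and>
     (\<forall>x\<in>carrier G. \<forall>y\<in>carrier G. len (x \<otimes>\<^bsub>G\<^esub> y) \<le> len x + len y) \<and>
     (\<forall>K. compact K \<and> K \<subseteq> {0..} \<longrightarrow>
        compactin T (T closure_of {x\<in>carrier G. len x \<in> K}))"

definition unitary_rep :: "('g, 'b) monoid_scheme \<Rightarrow> 'g topology \<Rightarrow> (complex \<Rightarrow> 'h::banach \<Rightarrow> 'h) \<Rightarrow> ('h \<Rightarrow> 'h \<Rightarrow> complex) \<Rightarrow> ('g \<Rightarrow> 'h \<Rightarrow> 'h) \<Rightarrow> bool" where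
  "unitary_rep G T sc ip U \<longleftrightarrow>
     (\<forall>x\<in>carrier G. unitary_op sc ip (U x)) \<and>
     U \<one>\<^bsub>G\<^esub> = id \<and>
     (\<forall>x\<in>carrier G. \<forall>y\<in>carrier G. U (x \<otimes>\<^bsub>G\<^esub> y) = U x \<circ> U y) \<and>
     (\<forall>\<psi>. continuous_map T euclidean (\<lambda>x. U x \<psi>))"

text \<open>A net (given as a filter F on the index type) in X diverges to infinity:
it has no cluster point in X.\<close>
definition diverges_to_infinity :: "'g topology \<Rightarrow> ('j \<Rightarrow> 'g) \<Rightarrow> 'j filter \<Rightarrow> bool" where
  "diverges_to_infinity T x F \<longleftrightarrow>
     (\<forall>p\<in>topspace T. \<not> (\<forall>V. openin T V \<and> p \<in> V \<longrightarrow> (\<exists>\<^sub>F j in F. x j \<in> V)))"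

end

theory Submission
  imports Defs
begin


locale chilb =
  fixes sc :: "complex \<Rightarrow> 'h::banach \<Rightarrow> 'h" and ip :: "'h \<Rightarrow> 'h \<Rightarrow> complex"
  assumes H: "complex_hilbert sc ip"
begin

lemma sc_one[simp]: "sc 1 x = x" using H unfolding complex_hilbert_def by metis
lemma sc_mult: "sc a (sc b x) = sc (a * b) x" using H unfolding complex_hilbert_def by blast
lemma sc_addr: "sc a (x + y) = sc a x + sc a y" using H unfolding complex_hilbert_def by blast
lemma sc_addl: "sc (a + b) x = sc a x + sc b x" using H unfolding complex_hilbert_def by blast
lemma sc_real: "sc (complex_of_real r) x = r *\<^sub>R x" using H unfolding complex_hilbert_def by blast
lemma ip_addr: "ip x (y + z) = ip x y + ip x z" using H unfolding complex_hilbert_def by blast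
lemma ip_scr: "ip x (sc a y) = a * ip x y" using H unfolding complex_hilbert_def by blast
lemma ip_sym: "ip y x = cnj (ip x y)" using H unfolding complex_hilbert_def by blast
lemma ip_self: "ip x x = complex_of_real ((norm x)\<^sup>2)" using H unfolding complex_hilbert_def by blast

lemma ip_addl: "ip (x + y) z = ip x z + ip y z"
  by (metis ip_sym ip_addr complex_cnj_add)
lemma ip_scl: "ip (sc a x) y = cnj a * ip x y"
  by (metis ip_sym ip_scr complex_cnj_mult)
lemma ip_scaleR_r: "ip x (r *\<^sub>R y) = r *\<^sub>R ip x y"
  by (metis ip_scr sc_real scaleR_conv_of_real)
lemma ip_scaleR_l: "ip (r *\<^sub>R x) y = r *\<^sub>R ip x y"
  by (metis ip_scl sc_real scaleR_conv_of_real complex_cnj_complex_of_real)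
lemma ip_zero_r[simp]: "ip x 0 = 0"
  by (metis ip_scaleR_r scaleR_zero_left)
lemma ip_zero_l[simp]: "ip 0 x = 0"
  by (metis ip_scaleR_l scaleR_zero_left)
lemma ip_minus_r: "ip x (- y) = - ip x y"
  by (metis add.inverse_unique ip_addr ip_zero_r add.right_inverse)
lemma ip_minus_l: "ip (- x) y = - ip x y"
  by (metis add.inverse_unique ip_addl ip_zero_l add.right_inverse)
lemma ip_diff_r: "ip x (y - z) = ip x y - ip x z"
  by (simp only: diff_conv_add_uminus ip_addr ip_minus_r)
lemma ip_diff_l: "ip (x - y) z = ip x z - ip y z"
  by (simp only: diff_conv_add_uminus ip_addl ip_minus_l)
lemma ip_sum_r: "ip x (sum f S) = (\<Sum>s\<in>S. ip x (f s))"
  by (induction S rule: infinite_finite_induct) (auto simp: ip_addr)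
lemma ip_sum_l: "ip (sum f S) x = (\<Sum>s\<in>S. ip (f s) x)"
  by (induction S rule: infinite_finite_induct) (auto simp: ip_addl)

lemma sc_zero[simp]: "sc a 0 = 0"
  by (metis add_cancel_right_right sc_addr add_0)
lemma sc_0[simp]: "sc 0 x = 0"
  by (metis of_real_0 sc_real scaleR_zero_left)
lemma sc_minus: "sc a (- x) = - sc a x"
  by (metis add.inverse_unique sc_addr sc_zero add.right_inverse)
lemma sc_diff: "sc a (x - y) = sc a x - sc a y"
  by (simp only: diff_conv_add_uminus sc_addr sc_minus)
lemma sc_uminus: "sc (- a) x = - sc a x"
  by (metis add.inverse_unique sc_addl sc_0 add.right_inverse)
lemma sc_scaleR: "sc a (r *\<^sub>R x) = r *\<^sub>R sc a x"
  by (metis sc_mult sc_real mult.commute)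
lemma sc_sum: "sc a (sum f S) = (\<Sum>s\<in>S. sc a (f s))"
  by (induction S rule: infinite_finite_induct) (auto simp: sc_addr)

lemma norm_sq: "(norm x)\<^sup>2 = Re (ip x x)"
  by (simp add: ip_self)
lemma ip_self_eq_0: "ip x x = 0 \<longleftrightarrow> x = 0"
  by (simp add: ip_self)

lemma norm_sc: "norm (sc a x) = cmod a * norm x"
proof -
  have "(norm (sc a x))\<^sup>2 = Re (cnj a * a * ip x x)"
    by (simp only: norm_sq ip_scl ip_scr ac_simps)
  also have "cnj a * a = complex_of_real ((cmod a)\<^sup>2)"
    by (metis complex_norm_square mult.commute)
  also have "Re (complex_of_real ((cmod a)\<^sup>2) * ip x x) = (cmod a * norm x)\<^sup>2"
    by (simp only: ip_self of_real_mult[symmetric] Re_complex_of_real power_mult_distrib)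
  finally show ?thesis
    by (metis norm_ge_zero power2_eq_imp_eq zero_le_mult_iff)
qed

lemma bounded_linear_sc: "bounded_linear (sc a)"
  by (rule bounded_linear_intro[where K="cmod a"]) (auto simp: sc_addr sc_scaleR norm_sc)

lemma norm_add_sq: "(norm (x + y))\<^sup>2 = (norm x)\<^sup>2 + (norm y)\<^sup>2 + 2 * Re (ip x y)"
proof -
  have "ip (x+y) (x+y) = ip x x + ip y y + (ip x y + cnj (ip x y))"
    by (simp add: ip_addl ip_addr ip_sym[of x y])
  then show ?thesis by (simp add: norm_sq)
qed

lemma norm_diff_sq: "(norm (x - y))\<^sup>2 = (norm x)\<^sup>2 + (norm y)\<^sup>2 - 2 * Re (ip x y)"
  using norm_add_sq[of x "- y"] by (simp add: ip_minus_r)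

lemma cauchy_schwarz: "cmod (ip x y) \<le> norm x * norm y"
proof (cases "ip x y = 0")
  case True then show ?thesis by simp
next
  case False
  define m where "m = cmod (ip x y)"
  have m: "m > 0" using False by (simp add: m_def)
  define u where "u = ip y x / m"
  define z where "z = sc u y"
  have cu: "cmod u = 1" using m by (simp add: u_def m_def ip_sym[of y x] norm_divide)
  have nz: "norm z = norm y" by (simp add: z_def norm_sc cu)
  have ipz: "ip x z = complex_of_real m"
  proof -
    have "ip x z = cnj (ip x y) * ip x y / m" by (simp add: z_def ip_scr u_def ip_sym[of y x])
    also have "cnj (ip x y) * ip x y = complex_of_real (m^2)"
      by (metis complex_norm_square m_def mult.commute)
    finally show ?thesis using m by (simp add: power2_eq_square)
  qed
  have yne: "norm y > 0" using False by auto
  have "\<And>r. 0 \<le> (norm x)\<^sup>2 + r^2 * (norm y)\<^sup>2 - 2 * r * m"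
  proof -
    fix r :: real
    have "0 \<le> (norm (x - r *\<^sub>R z))\<^sup>2" by simp
    also have "\<dots> = (norm x)\<^sup>2 + r^2 * (norm y)\<^sup>2 - 2 * r * m"
      by (simp add: norm_diff_sq ip_scaleR_r ipz nz power_mult_distrib)
    finally show "0 \<le> (norm x)\<^sup>2 + r^2 * (norm y)\<^sup>2 - 2 * r * m" .
  qed
  from this[of "m / (norm y)\<^sup>2"] yne
  have "0 \<le> (norm x)\<^sup>2 - m^2 / (norm y)\<^sup>2"
    by (simp add: field_simps power2_eq_square)
  then have "m^2 \<le> (norm x * norm y)^2" using yne
    by (simp add: field_simps power_mult_distrib)
  then have "m \<le> norm x * norm y" by (rule power2_le_imp_le) simp
  then show ?thesis unfolding m_def .
qed

lemma bounded_bilinear_ip: "bounded_bilinear ip"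
proof
  show "\<exists>K. \<forall>a b. norm (ip a b) \<le> norm a * norm b * K"
    by (rule exI[of _ 1]) (simp add: cauchy_schwarz)
qed (simp_all add: ip_addl ip_addr ip_scaleR_l ip_scaleR_r)

lemmas tendsto_ip = bounded_bilinear.tendsto[OF bounded_bilinear_ip]
lemmas continuous_on_ip = bounded_bilinear.continuous_on[OF bounded_bilinear_ip]

lemma ip_eq_0_all: "(\<And>v. ip v w = 0) \<Longrightarrow> w = 0"
  using ip_self_eq_0 by blast

end


lemma dense_eq:
  assumes "closure D = UNIV" "continuous_on UNIV f" "continuous_on UNIV g" "\<And>x. x \<in> D \<Longrightarrow> f x = g x"
  shows "f x = (g x :: 'b::t2_space)"
proof -
  have "closed {x. f x = g x}" using assms by (intro closed_Collect_eq)
  moreover have "D \<subseteq> {x. f x = g x}" using assms by auto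
  ultimately have "closure D \<subseteq> {x. f x = g x}" by (rule closure_minimal[rotated])
  then show ?thesis using assms(1) by auto
qed

context chilb begin

definition csub :: "'h set \<Rightarrow> bool" where
  "csub M \<longleftrightarrow> 0 \<in> M \<and> (\<forall>x\<in>M. \<forall>y\<in>M. x + y \<in> M) \<and> (\<forall>a. \<forall>x\<in>M. sc a x \<in> M)"

lemma csub_minus: "csub M \<Longrightarrow> x \<in> M \<Longrightarrow> - x \<in> M"
  unfolding csub_def by (metis sc_one sc_uminus)
lemma csub_diff: "csub M \<Longrightarrow> x \<in> M \<Longrightarrow> y \<in> M \<Longrightarrow> x - y \<in> M"
  using csub_minus[of M y] unfolding csub_def by (metis diff_conv_add_uminus)
lemma csub_scaleR: "csub M \<Longrightarrow> x \<in> M \<Longrightarrow> r *\<^sub>R x \<in> M"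
  unfolding csub_def by (metis sc_real)

lemma parallelogram: fixes a b :: 'h shows "(norm (a - b))\<^sup>2 + (norm (a + b))\<^sup>2 = 2 * (norm a)\<^sup>2 + 2 * (norm b)\<^sup>2"
  unfolding norm_add_sq norm_diff_sq by linarith

lemma projection:
  assumes M: "csub M" "closed M"
  shows "\<exists>m\<in>M. \<forall>u\<in>M. ip u (x - m) = 0"
proof -
  define d where "d = (INF m\<in>M. norm (x - m))"
  have Mne: "M \<noteq> {}" using M by (auto simp: csub_def)
  have bdd: "bdd_below ((\<lambda>m. norm (x - m)) ` M)" by (rule bdd_belowI[of _ 0]) auto
  have dle: "d \<le> norm (x - m)" if "m \<in> M" for m
    unfolding d_def using bdd that by (rule cINF_lower)
  have d0: "d \<ge> 0" unfolding d_def by (rule cINF_greatest[OF Mne]) simp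
  have "\<forall>n. \<exists>m\<in>M. norm (x - m) < d + 1 / (real n + 1)"
  proof
    fix n :: nat
    have "(INF m\<in>M. norm (x - m)) < d + 1 / (real n + 1)" by (simp add: d_def)
    then show "\<exists>m\<in>M. norm (x - m) < d + 1 / (real n + 1)"
      using cINF_less_iff[OF Mne bdd] by blast
  qed
  then obtain s where s: "\<And>n. s n \<in> M" "\<And>n. norm (x - s n) < d + 1 / (real n + 1)"
    by metis
  define e where "e n = 1 / (real n + 1)" for n :: nat
  have e0: "e n > 0" for n by (simp add: e_def)
  have elim0: "e \<longlonglongrightarrow> 0"
  proof -
    have "e = (\<lambda>n. inverse (real (Suc n)))" by (auto simp: e_def fun_eq_iff inverse_eq_divide)
    then show ?thesis using LIMSEQ_inverse_real_of_nat by simp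
  qed
  have emono: "n \<le> k \<Longrightarrow> e k \<le> e n" for n k by (simp add: e_def frac_le)
  have key: "(norm (s n - s k))\<^sup>2 \<le> 4 * d * e n + 2 * (e n)\<^sup>2 + 4 * d * e k + 2 * (e k)\<^sup>2" for n k
  proof -
    have mid: "(1/2) *\<^sub>R (s n + s k) \<in> M" using M s by (auto simp: csub_def intro!: csub_scaleR)
    have "(x - s n) + (x - s k) = 2 *\<^sub>R (x - (1/2) *\<^sub>R (s n + s k))"
      by (simp add: algebra_simps scaleR_2)
    then have "norm ((x - s n) + (x - s k)) = 2 * norm (x - (1/2) *\<^sub>R (s n + s k))" by simp
    then have A: "(norm ((x - s n) + (x - s k)))\<^sup>2 \<ge> 4 * d\<^sup>2"
      using dle[OF mid] d0 by (simp add: power_mult_distrib power_mono)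
    have B: "(norm (x - s n))\<^sup>2 \<le> (d + e n)\<^sup>2"
      using s(2)[of n] d0 by (intro power_mono) (auto simp: e_def)
    have C: "(norm (x - s k))\<^sup>2 \<le> (d + e k)\<^sup>2"
      using s(2)[of k] d0 by (intro power_mono) (auto simp: e_def)
    have "(x - s n) - (x - s k) = s k - s n" by simp
    then have "(norm (s n - s k))\<^sup>2 = 2 * (norm (x - s n))\<^sup>2 + 2 * (norm (x - s k))\<^sup>2 - (norm ((x - s n) + (x - s k)))\<^sup>2"
      using parallelogram[of "x - s n" "x - s k"] by (simp add: norm_minus_commute)
    with A B C show ?thesis by (simp add: power2_eq_square algebra_simps)
  qed
  have "Cauchy s"
  proof (rule metric_CauchyI)
    fix r :: real assume r: "r > 0"
    have "((\<lambda>n. 8 * d * e n + 4 * (e n)\<^sup>2) \<longlongrightarrow> 8 * d * 0 + 4 * 0\<^sup>2) sequentially"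
      by (intro tendsto_intros elim0)
    then have "eventually (\<lambda>n. 8 * d * e n + 4 * (e n)\<^sup>2 < r\<^sup>2) sequentially"
      using r by (intro order_tendstoD) auto
    then obtain N where N: "\<And>n. n \<ge> N \<Longrightarrow> 8 * d * e n + 4 * (e n)\<^sup>2 < r\<^sup>2"
      by (auto simp: eventually_sequentially)
    show "\<exists>N. \<forall>m\<ge>N. \<forall>n\<ge>N. dist (s m) (s n) < r"
    proof (intro exI allI impI)
      fix m n assume mn: "m \<ge> N" "n \<ge> N"
      have "(norm (s m - s n))\<^sup>2 \<le> 4 * d * e m + 2 * (e m)\<^sup>2 + 4 * d * e n + 2 * (e n)\<^sup>2" by (rule key)
      also have "\<dots> \<le> 8 * d * e N + 4 * (e N)\<^sup>2"
      proof -
        have "e m \<le> e N" "e n \<le> e N" using emono mn by auto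
        moreover have "(e m)\<^sup>2 \<le> (e N)\<^sup>2" "(e n)\<^sup>2 \<le> (e N)\<^sup>2"
          using calculation by (auto intro!: power_mono less_imp_le[OF e0])
        ultimately have "4 * d * e m \<le> 4 * d * e N" "4 * d * e n \<le> 4 * d * e N"
          "2 * (e m)\<^sup>2 \<le> 2 * (e N)\<^sup>2" "2 * (e n)\<^sup>2 \<le> 2 * (e N)\<^sup>2"
          using d0 by (auto intro!: mult_left_mono)
        then show ?thesis by linarith
      qed
      also have "\<dots> < r\<^sup>2" using N by simp
      finally have "(norm (s m - s n))\<^sup>2 < r\<^sup>2" .
      then show "dist (s m) (s n) < r" using r by (simp add: dist_norm power_less_imp_less_base less_imp_le)
    qed
  qed
  then obtain m where lim: "s \<longlonglongrightarrow> m" by (auto simp: Cauchy_convergent_iff convergent_def)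
  have mM: "m \<in> M" using M(2) s(1) lim closed_sequentially by blast
  have L1: "((\<lambda>n. norm (x - s n)) \<longlongrightarrow> norm (x - m)) sequentially"
    by (intro tendsto_intros lim)
  have L2: "((\<lambda>n. d + e n) \<longlongrightarrow> d + 0) sequentially"
    by (intro tendsto_intros elim0)
  have ev: "\<forall>\<^sub>F n in sequentially. norm (x - s n) \<le> d + e n"
    using s(2) by (auto simp: e_def intro!: less_imp_le always_eventually)
  have "norm (x - m) \<le> d + 0"
    by (rule tendsto_le[OF trivial_limit_sequentially L2 L1 ev])
  then have opt: "norm (x - m) \<le> norm (x - m')" if "m' \<in> M" for m'
    using dle[OF that] by linarith
  show ?thesis
  proof (intro bexI[OF _ mM] ballI)
    fix u assume u: "u \<in> M"
    define r where "r = x - m"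
    define c where "c = ip u r"
    show "ip u (x - m) = 0"
    proof (rule ccontr)
      assume "ip u (x - m) \<noteq> 0"
      then have c0: "cmod c > 0" by (simp add: c_def r_def)
      define t where "t = 1 / ((norm u)\<^sup>2 + 1)"
      have t0: "t > 0" by (simp add: t_def add_nonneg_pos)
      have "m + sc (complex_of_real t * c) u \<in> M" using M u mM by (auto simp: csub_def)
      from opt[OF this] have "(norm r)\<^sup>2 \<le> (norm (r - sc (complex_of_real t * c) u))\<^sup>2"
        by (simp add: r_def algebra_simps power_mono)
      also have "\<dots> = (norm r)\<^sup>2 + (t * cmod c)\<^sup>2 * (norm u)\<^sup>2 - 2 * Re (complex_of_real t * c * ip r u)"
        by (simp add: norm_diff_sq norm_sc ip_scr power_mult_distrib norm_mult)
      also have "ip r u = cnj c" by (simp add: c_def ip_sym[of u r])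
      also have "Re (complex_of_real t * c * cnj c) = t * (cmod c)\<^sup>2"
        by (simp only: mult.assoc complex_norm_square[symmetric] of_real_mult[symmetric] Re_complex_of_real)
      finally have "(norm r)\<^sup>2 \<le> (norm r)\<^sup>2 + (t * cmod c)\<^sup>2 * (norm u)\<^sup>2 - 2 * (t * (cmod c)\<^sup>2)" .
      then have "0 \<le> (t * cmod c)\<^sup>2 * (norm u)\<^sup>2 - 2 * (t * (cmod c)\<^sup>2)" by linarith
      also have "(t * cmod c)\<^sup>2 * (norm u)\<^sup>2 - 2 * (t * (cmod c)\<^sup>2) = t * (cmod c)\<^sup>2 * (t * (norm u)\<^sup>2 - 2)"
        by (simp add: power2_eq_square algebra_simps)
      finally have "0 \<le> t * (cmod c)\<^sup>2 * (t * (norm u)\<^sup>2 - 2)" .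
      moreover have "t * (norm u)\<^sup>2 < 2"
      proof -
        have "t * (norm u)\<^sup>2 \<le> 1" by (simp add: t_def pos_divide_le_eq add_nonneg_pos)
        then show ?thesis by simp
      qed
      moreover have "t * (cmod c)\<^sup>2 > 0" using t0 c0 by simp
      ultimately show False using mult_pos_neg[of "t * (cmod c)\<^sup>2" "t * (norm u)\<^sup>2 - 2"] by linarith
    qed
  qed
qed

lemma riesz:
  assumes g: "\<And>x y. g (x + y) = g x + g y" "\<And>a x. g (sc a x) = a * g x"
    "\<And>x. cmod (g x) \<le> C * norm x"
  shows "\<exists>w. \<forall>x. g x = ip w x"
proof -
  have bl: "bounded_linear g"
  proof (rule bounded_linear_intro[where K=C])
    show "g (r *\<^sub>R x) = r *\<^sub>R g x" for r x using g(2)[of "complex_of_real r" x]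
      by (simp add: sc_real scaleR_conv_of_real)
  qed (use g in \<open>auto simp: mult.commute\<close>)
  interpret g: bounded_linear g by (rule bl)
  show ?thesis
  proof (cases "\<forall>x. g x = 0")
    case True then show ?thesis by (intro exI[of _ 0]) simp
  next
    case False
    then obtain x0 where x0: "g x0 \<noteq> 0" by auto
    define N where "N = {x. g x = 0}"
    have csN: "csub N" by (auto simp: csub_def N_def g)
    have clN: "closed N" unfolding N_def
      by (intro closed_Collect_eq g.continuous_on continuous_on_id continuous_on_const)
    obtain m where m: "m \<in> N" "\<And>u. u \<in> N \<Longrightarrow> ip u (x0 - m) = 0"
      using projection[OF csN clN, of x0] by auto
    define v where "v = x0 - m"
    have gv: "g v \<noteq> 0" using m(1) x0 by (simp add: v_def N_def g.diff)
    have vne: "v \<noteq> 0" using gv by auto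
    have nv: "(norm v)\<^sup>2 > 0" using vne by simp
    show ?thesis
    proof (intro exI allI)
      fix x
      define y where "y = x - sc (g x / g v) v"
      have "g y = 0" using gv by (simp add: y_def g.diff g(2))
      then have "ip y v = 0" using m(2) by (simp add: N_def v_def)
      then have "ip x v = cnj (g x / g v) * complex_of_real ((norm v)\<^sup>2)"
        by (simp add: y_def ip_diff_l ip_scl ip_self)
      then have "ip v x = (g x / g v) * complex_of_real ((norm v)\<^sup>2)" by (simp add: ip_sym[of v x])
      then have "g x = (g v / complex_of_real ((norm v)\<^sup>2)) * ip v x" using gv nv
        by (simp add: field_simps)
      then show "g x = ip (sc (cnj (g v / complex_of_real ((norm v)\<^sup>2))) v) x"
        by (simp add: ip_scl)
    qed
  qed
qed

lemma extension:
  fixes f :: "'h \<Rightarrow> 'v::banach" and scV :: "complex \<Rightarrow> 'v \<Rightarrow> 'v"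
  assumes D: "csub D" "closure D = UNIV"
    and add: "\<And>x y. x \<in> D \<Longrightarrow> y \<in> D \<Longrightarrow> f (x + y) = f x + f y"
    and hom: "\<And>a x. x \<in> D \<Longrightarrow> f (sc a x) = scV a (f x)"
    and bnd: "\<And>x. x \<in> D \<Longrightarrow> norm (f x) \<le> C * norm x"
    and scVc: "\<And>a. continuous_on UNIV (scV a)"
  shows "\<exists>g. (\<forall>x\<in>D. g x = f x) \<and> (\<forall>x y. g (x + y) = g x + g y) \<and> (\<forall>a x. g (sc a x) = scV a (g x))
           \<and> (\<forall>x. norm (g x) \<le> C * norm x) \<and> continuous_on UNIV g"
proof -
  have f0: "f 0 = 0" using add[of 0 0] D by (simp add: csub_def)
  have fm: "f (- y) = - f y" if "y \<in> D" for y
    using add[of y "- y"] that csub_minus[OF D(1) that] f0 by (simp add: eq_neg_iff_add_eq_0 add.commute)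
  have fd: "f (x - y) = f x - f y" if "x \<in> D" "y \<in> D" for x y
    using add[of x "- y"] fm[of y] that csub_minus[OF D(1)] by simp
  have uc: "uniformly_continuous_on D f"
    unfolding uniformly_continuous_on_def
  proof (intro allI impI)
    fix e :: real assume e: "e > 0"
    show "\<exists>d>0. \<forall>x\<in>D. \<forall>x'\<in>D. dist x' x < d \<longrightarrow> dist (f x') (f x) < e"
    proof (intro exI[of _ "e / (\<bar>C\<bar> + 1)"] conjI ballI impI)
      show "e / (\<bar>C\<bar> + 1) > 0" using e by (simp add: add_nonneg_pos)
      fix x x' assume xx: "x \<in> D" "x' \<in> D" "dist x' x < e / (\<bar>C\<bar> + 1)"
      have "dist (f x') (f x) = norm (f (x' - x))" using xx by (simp add: dist_norm fd)
      also have "\<dots> \<le> C * norm (x' - x)" using bnd csub_diff[OF D(1) xx(2,1)] by simp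
      also have "\<dots> \<le> (\<bar>C\<bar> + 1) * norm (x' - x)" by (intro mult_right_mono) auto
      also have "\<dots> < (\<bar>C\<bar> + 1) * (e / (\<bar>C\<bar> + 1))"
        using xx(3) by (intro mult_strict_left_mono) (auto simp: dist_norm add_nonneg_pos)
      also have "\<dots> = e" by (simp add: add_nonneg_pos)
      finally show "dist (f x') (f x) < e" .
    qed
  qed
  obtain g where g: "uniformly_continuous_on (closure D) g" "\<And>x. x \<in> D \<Longrightarrow> f x = g x"
    using uniformly_continuous_on_extension_on_closure[OF uc] by metis
  have gc: "continuous_on UNIV g" using g(1) D(2) uniformly_continuous_imp_continuous by force
  have gadd1: "g (x + y) = g x + g y" if "y \<in> D" for x y
  proof (rule dense_eq[OF D(2), where f="\<lambda>x. g (x + y)" and g="\<lambda>x. g x + g y"])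
    show "continuous_on UNIV (\<lambda>x. g (x + y))"
      by (rule continuous_on_compose2[OF gc]) (auto intro!: continuous_intros)
    show "continuous_on UNIV (\<lambda>x. g x + g y)" by (intro continuous_intros gc)
    show "g (x + y) = g x + g y" if "x \<in> D" for x
      using that \<open>y \<in> D\<close> D(1) g(2)[symmetric] add by (simp add: csub_def)
  qed
  have gadd: "g (x + y) = g x + g y" for x y
  proof (rule dense_eq[OF D(2), where f="\<lambda>y. g (x + y)" and g="\<lambda>y. g x + g y"])
    show "continuous_on UNIV (\<lambda>y. g (x + y))"
      by (rule continuous_on_compose2[OF gc]) (auto intro!: continuous_intros)
    show "continuous_on UNIV (\<lambda>y. g x + g y)" by (intro continuous_intros gc)
  qed (rule gadd1)
  have ghom: "g (sc a x) = scV a (g x)" for a x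
  proof (rule dense_eq[OF D(2), where f="\<lambda>x. g (sc a x)" and g="\<lambda>x. scV a (g x)"])
    show "continuous_on UNIV (\<lambda>x. g (sc a x))"
      by (rule continuous_on_compose2[OF gc]) (auto intro!: linear_continuous_on bounded_linear_sc)
    show "continuous_on UNIV (\<lambda>x. scV a (g x))"
      by (rule continuous_on_compose2[OF scVc gc]) auto
    show "g (sc a x) = scV a (g x)" if "x \<in> D" for x
      using that D(1) g(2)[symmetric] hom by (simp add: csub_def)
  qed
  have gb: "norm (g x) \<le> C * norm x" for x
  proof -
    have "norm (g x) - C * norm x \<le> 0"
      by (rule continuous_le_on_closure[where S=D]) (use D(2) gc bnd g(2) in \<open>auto intro!: continuous_intros\<close>)
    then show ?thesis by simp
  qed
  show ?thesis using g(2) gadd ghom gb gc by metis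
qed

end


context chilb begin

lemma bounded_op_bl:
  assumes "bounded_op sc T" shows "bounded_linear T"
proof -
  from assms obtain C where add: "\<And>x y. T (x + y) = T x + T y"
    and hom: "\<And>a x. T (sc a x) = sc a (T x)" and b: "\<And>x. norm (T x) \<le> C * norm x"
    unfolding bounded_op_def by blast
  show ?thesis
  proof (rule bounded_linear_intro[where K=C])
    show "T (r *\<^sub>R x) = r *\<^sub>R T x" for r x using hom[of "of_real r" x] by (simp add: sc_real)
  qed (use add b in \<open>auto simp: mult.commute\<close>)
qed

lemma bounded_op_cont: "bounded_op sc T \<Longrightarrow> continuous_on UNIV T"
  by (intro linear_continuous_on bounded_op_bl)

lemma bounded_opD:
  assumes "bounded_op sc T"
  shows "T (x + y) = T x + T y" "T (sc a x) = sc a (T x)"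
  using assms unfolding bounded_op_def by blast+

lemma self_adjointD:
  assumes "self_adjoint sc ip DA A"
  shows "csub DA" "closure DA = UNIV"
    "\<And>x y. x \<in> DA \<Longrightarrow> y \<in> DA \<Longrightarrow> A (x + y) = A x + A y"
    "\<And>a x. x \<in> DA \<Longrightarrow> A (sc a x) = sc a (A x)"
    "\<And>y. y \<in> DA \<longleftrightarrow> (\<exists>z. \<forall>x\<in>DA. ip (A x) y = ip x z)"
    "\<And>x y. x \<in> DA \<Longrightarrow> y \<in> DA \<Longrightarrow> ip (A x) y = ip x (A y)"
  using assms unfolding self_adjoint_def csub_def by blast+

definition sesq :: "'h set \<Rightarrow> ('h \<Rightarrow> 'h \<Rightarrow> complex) \<Rightarrow> bool" where
  "sesq D p \<longleftrightarrow> (\<forall>x\<in>D. \<forall>y\<in>D. \<forall>z\<in>D. p (x + y) z = p x z + p y z \<and> p x (y + z) = p x y + p x z)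
     \<and> (\<forall>t. \<forall>x\<in>D. \<forall>y\<in>D. p (sc t x) y = cnj t * p x y \<and> p x (sc t y) = t * p x y)"

lemma sesq_addl: "sesq D p \<Longrightarrow> x \<in> D \<Longrightarrow> y \<in> D \<Longrightarrow> z \<in> D \<Longrightarrow> p (x + y) z = p x z + p y z"
  unfolding sesq_def by blast
lemma sesq_addr: "sesq D p \<Longrightarrow> x \<in> D \<Longrightarrow> y \<in> D \<Longrightarrow> z \<in> D \<Longrightarrow> p x (y + z) = p x y + p x z"
  unfolding sesq_def by blast
lemma sesq_scl: "sesq D p \<Longrightarrow> x \<in> D \<Longrightarrow> y \<in> D \<Longrightarrow> p (sc t x) y = cnj t * p x y"
  unfolding sesq_def by blast
lemma sesq_scr: "sesq D p \<Longrightarrow> x \<in> D \<Longrightarrow> y \<in> D \<Longrightarrow> p x (sc t y) = t * p x y"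
  unfolding sesq_def by blast

lemma polar_expand:
  assumes p: "sesq D p" and D: "csub D" and ab: "a \<in> D" "b \<in> D"
  shows "p (a + sc t b) (a + sc t b) = p a a + t * p a b + cnj t * p b a + cnj t * t * p b b"
proof -
  have tb: "sc t b \<in> D" using D ab by (simp add: csub_def)
  have ab2: "a + sc t b \<in> D" using D ab tb by (simp add: csub_def)
  have "p (a + sc t b) (a + sc t b) = p a (a + sc t b) + p (sc t b) (a + sc t b)"
    by (rule sesq_addl[OF p ab(1) tb ab2])
  also have "p a (a + sc t b) = p a a + t * p a b"
    using sesq_addr[OF p ab(1) ab(1) tb] sesq_scr[OF p ab(1) ab(2)] by simp
  also have "p (sc t b) (a + sc t b) = cnj t * p b (a + sc t b)" by (rule sesq_scl[OF p ab(2) ab2])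
  also have "p b (a + sc t b) = p b a + t * p b b"
    using sesq_addr[OF p ab(2) ab(1) tb] sesq_scr[OF p ab(2) ab(2)] by simp
  finally show ?thesis by (simp add: algebra_simps)
qed

lemma polarization:
  assumes p: "sesq D p" and D: "csub D" and ab: "a \<in> D" "b \<in> D"
  shows "4 * p a b = p (a + sc 1 b) (a + sc 1 b) - p (a + sc (-1) b) (a + sc (-1) b)
     - \<i> * p (a + sc \<i> b) (a + sc \<i> b) + \<i> * p (a + sc (-\<i>) b) (a + sc (-\<i>) b)"
  unfolding polar_expand[OF assms, of 1] polar_expand[OF assms, of "-1"]
    polar_expand[OF assms, of "\<i>"] polar_expand[OF assms, of "-\<i>"]
  by (simp add: algebra_simps)

lemma polar_zero:
  assumes p: "sesq D p" and D: "csub D" and z: "\<And>a. a \<in> D \<Longrightarrow> p a a = 0" and ab: "a \<in> D" "b \<in> D"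
  shows "p a b = 0"
proof -
  have T: "a + sc t b \<in> D" for t using D ab by (simp add: csub_def)
  have "4 * p a b = 0" unfolding polarization[OF p D ab]
    using z[OF T[of 1]] z[OF T[of "-1"]] z[OF T[of "\<i>"]] z[OF T[of "-\<i>"]] by simp
  then show ?thesis by simp
qed

lemma sesq_zero_l: assumes "sesq D p" "csub D" "b \<in> D" shows "p 0 b = 0"
proof -
  have "p (0 + 0) b = p 0 b + p 0 b" using assms by (intro sesq_addl) (auto simp: csub_def)
  then show ?thesis by simp
qed

lemma sesq_zero_r: assumes "sesq D p" "csub D" "a \<in> D" shows "p a 0 = 0"
proof -
  have "p a (0 + 0) = p a 0 + p a 0" using assms by (intro sesq_addr) (auto simp: csub_def)
  then show ?thesis by simp
qed

lemma polar_bound: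
  assumes p: "sesq D p" and D: "csub D" and c: "c \<ge> 0"
    and bd: "\<And>a. a \<in> D \<Longrightarrow> cmod (p a a) \<le> c * (norm a)\<^sup>2" and ab: "a \<in> D" "b \<in> D"
  shows "cmod (p a b) \<le> 4 * c * norm a * norm b"
proof -
  have unit: "cmod (p a b) \<le> 4 * c" if ab: "a \<in> D" "b \<in> D" "norm a \<le> 1" "norm b \<le> 1" for a b
  proof -
    have each: "cmod (p (a + sc t b) (a + sc t b)) \<le> 4 * c" if t: "cmod t = 1" for t
    proof -
      have "a + sc t b \<in> D" using D ab by (simp add: csub_def)
      then have "cmod (p (a + sc t b) (a + sc t b)) \<le> c * (norm (a + sc t b))\<^sup>2" by (rule bd)
      also have "norm (a + sc t b) \<le> 2"
      proof -
        have "norm (a + sc t b) \<le> norm a + norm (sc t b)" by (rule norm_triangle_ineq)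
        also have "norm (sc t b) = norm b" by (simp add: norm_sc t)
        finally show ?thesis using ab by linarith
      qed
      then have "(norm (a + sc t b))\<^sup>2 \<le> 2\<^sup>2" by (intro power_mono) auto
      then have "c * (norm (a + sc t b))\<^sup>2 \<le> c * 4" using c by (intro mult_left_mono) auto
      finally show ?thesis by simp
    qed
    have "cmod (4 * p a b) \<le> cmod (p (a + sc 1 b) (a + sc 1 b)) + cmod (p (a + sc (-1) b) (a + sc (-1) b))
       + cmod (p (a + sc \<i> b) (a + sc \<i> b)) + cmod (p (a + sc (-\<i>) b) (a + sc (-\<i>) b))"
      unfolding polarization[OF p D ab(1,2)]
      by (rule order_trans[OF norm_triangle_ineq] add_mono order_trans[OF norm_triangle_ineq4]
          order_trans[OF norm_triangle_ineq4] | simp add: norm_mult)+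
    also have "\<dots> \<le> 4 * c + 4 * c + 4 * c + 4 * c"
      by (intro add_mono each) auto
    finally show ?thesis by (simp add: norm_mult)
  qed
  show ?thesis
  proof (cases "a = 0 \<or> b = 0")
    case True then show ?thesis using sesq_zero_l[OF p D] sesq_zero_r[OF p D] ab by auto
  next
    case False
    then have na: "norm a > 0" and nb: "norm b > 0" by auto
    define a' where "a' = sc (of_real (1 / norm a)) a"
    define b' where "b' = sc (of_real (1 / norm b)) b"
    have a'D: "a' \<in> D" and b'D: "b' \<in> D" using D ab by (auto simp: csub_def a'_def b'_def)
    have na': "norm a' = 1" using na by (simp add: a'_def norm_sc norm_divide)
    have nb': "norm b' = 1" using nb by (simp add: b'_def norm_sc norm_divide)
    have aa: "a = sc (of_real (norm a)) a'" using na by (simp add: a'_def sc_mult flip: of_real_mult)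
    have bb: "b = sc (of_real (norm b)) b'" using nb by (simp add: b'_def sc_mult flip: of_real_mult)
    have "p a b = of_real (norm a) * of_real (norm b) * p a' b'"
      by (subst aa, subst bb) (use p a'D b'D D in \<open>simp add: sesq_def csub_def\<close>)
    then have "cmod (p a b) = norm a * norm b * cmod (p a' b')" by (simp add: norm_mult)
    also have "\<dots> \<le> norm a * norm b * (4 * c)"
      using unit[OF a'D b'D] na' nb' by (intro mult_left_mono) auto
    finally show ?thesis by (simp add: algebra_simps)
  qed
qed

lemma uniq_rep:
  assumes "closure D = UNIV" "\<And>a. a \<in> D \<Longrightarrow> ip a w1 = ip a w2" shows "w1 = w2"
proof -
  have "ip a (w1 - w2) = 0" for a
  proof (rule dense_eq[OF assms(1), where f="\<lambda>a. ip a (w1 - w2)" and g="\<lambda>a. 0"])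
    show "continuous_on UNIV (\<lambda>a. ip a (w1 - w2))" by (intro continuous_on_ip continuous_intros)
    show "ip a (w1 - w2) = 0" if "a \<in> D" for a using assms(2)[OF that] by (simp add: ip_diff_r)
  qed simp
  from this[of "w1 - w2"] show ?thesis by (simp add: ip_self_eq_0)
qed

lemma commutator_exists:
  assumes SA: "self_adjoint sc ip DA A" and S: "in_C1 sc ip DA A S"
  shows "bounded_op sc (commutator sc ip DA A S) \<and>
    (\<forall>a\<in>DA. \<forall>b\<in>DA. ip a (commutator sc ip DA A S b) = ip (A a) (S b) - ip a (S (A b)))"
proof -
  define q where "q = (\<lambda>a b. ip (A a) (S b) - ip a (S (A b)))"
  note DA = self_adjointD[OF SA]
  from S obtain c where Sb: "bounded_op sc S"
    and cb: "\<And>\<phi>. \<phi> \<in> DA \<Longrightarrow> cmod (ip (A \<phi>) (S \<phi>) - ip \<phi> (S (A \<phi>))) \<le> c * (norm \<phi>)\<^sup>2"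
    unfolding in_C1_def by blast
  note SD = bounded_opD[OF Sb]
  have q_sesq: "sesq DA q"
    unfolding sesq_def q_def using DA(1)
    by (auto simp: DA(3,4) SD ip_addl ip_addr ip_scl ip_scr ip_diff_l ip_diff_r csub_def algebra_simps)
  define K where "K = 4 * \<bar>c\<bar>"
  have K0: "K \<ge> 0" by (simp add: K_def)
  have qb: "cmod (q a b) \<le> K * norm a * norm b" if "a \<in> DA" "b \<in> DA" for a b
  proof -
    have "cmod (q a b) \<le> 4 * \<bar>c\<bar> * norm a * norm b"
    proof (rule polar_bound[OF q_sesq DA(1)])
      show "cmod (q a a) \<le> \<bar>c\<bar> * (norm a)\<^sup>2" if "a \<in> DA" for a
        using cb[OF that] by (simp add: q_def) (smt (verit, best) mult_right_mono zero_le_power2)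
    qed (use that in auto)
    then show ?thesis by (simp add: K_def)
  qed
  have rep: "\<exists>w. (\<forall>a\<in>DA. q a b = ip a w) \<and> norm w \<le> K * norm b" if b: "b \<in> DA" for b
  proof -
    have "\<exists>g. (\<forall>x\<in>DA. g x = cnj (q x b)) \<and> (\<forall>x y. g (x + y) = g x + g y) \<and> (\<forall>a x. g (sc a x) = a * g x)
           \<and> (\<forall>x. norm (g x) \<le> (K * norm b) * norm x) \<and> continuous_on UNIV g"
    proof (rule extension[OF DA(1,2)])
      show "cnj (q (x + y) b) = cnj (q x b) + cnj (q y b)" if "x \<in> DA" "y \<in> DA" for x y
        using q_sesq that b by (simp add: sesq_def)
      show "cnj (q (sc a x) b) = a * cnj (q x b)" if "x \<in> DA" for a x
        using q_sesq that b by (simp add: sesq_def)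
      show "norm (cnj (q x b)) \<le> K * norm b * norm x" if "x \<in> DA" for x
        using qb[OF that b] by (simp add: algebra_simps)
    qed (intro continuous_intros)
    then obtain g where g: "\<And>x. x \<in> DA \<Longrightarrow> g x = cnj (q x b)" "\<And>x y. g (x + y) = g x + g y"
      "\<And>a x. g (sc a x) = a * g x" "\<And>x. norm (g x) \<le> (K * norm b) * norm x" by blast
    obtain w where w: "\<And>x. g x = ip w x" using riesz[OF g(2,3,4)] by blast
    have "\<forall>a\<in>DA. q a b = ip a w"
    proof
      fix a assume "a \<in> DA"
      then have "q a b = cnj (g a)" using g(1) by simp
      also have "\<dots> = ip a w" by (simp add: w ip_sym[of w a])
      finally show "q a b = ip a w" .
    qed
    moreover have "norm w \<le> K * norm b"
    proof -
      have "(norm w)\<^sup>2 = Re (g w)" by (simp add: w norm_sq)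
      also have "\<dots> \<le> cmod (g w)" by (rule complex_Re_le_cmod)
      also have "\<dots> \<le> K * norm b * norm w" using g(4) by simp
      finally have "norm w * norm w \<le> (K * norm b) * norm w" by (simp add: power2_eq_square)
      then show ?thesis
        by (cases "norm w = 0") (use K0 in \<open>auto simp: mult_le_cancel_right\<close>)
    qed
    ultimately show ?thesis by blast
  qed
  define W where "W b = (SOME w. (\<forall>a\<in>DA. q a b = ip a w) \<and> norm w \<le> K * norm b)" for b
  have W: "(\<forall>a\<in>DA. q a b = ip a (W b)) \<and> norm (W b) \<le> K * norm b" if "b \<in> DA" for b
    unfolding W_def by (rule someI_ex[OF rep[OF that]])
  have Wadd: "W (x + y) = W x + W y" if "x \<in> DA" "y \<in> DA" for x y
  proof (rule uniq_rep[OF DA(2)])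
    fix a assume a: "a \<in> DA"
    have xy: "x + y \<in> DA" using that DA(1) by (simp add: csub_def)
    have "ip a (W (x + y)) = q a (x + y)" using W[OF xy] a by simp
    also have "\<dots> = q a x + q a y" using q_sesq a that by (simp add: sesq_def)
    also have "\<dots> = ip a (W x + W y)" using W that a by (simp add: ip_addr)
    finally show "ip a (W (x + y)) = ip a (W x + W y)" .
  qed
  have Whom: "W (sc t x) = sc t (W x)" if "x \<in> DA" for t x
  proof (rule uniq_rep[OF DA(2)])
    fix a assume a: "a \<in> DA"
    have tx: "sc t x \<in> DA" using that DA(1) by (simp add: csub_def)
    have "ip a (W (sc t x)) = q a (sc t x)" using W[OF tx] a by simp
    also have "\<dots> = t * q a x" using q_sesq a that by (simp add: sesq_def)
    also have "\<dots> = ip a (sc t (W x))" using W that a by (simp add: ip_scr)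
    finally show "ip a (W (sc t x)) = ip a (sc t (W x))" .
  qed
  have "\<exists>g. (\<forall>x\<in>DA. g x = W x) \<and> (\<forall>x y. g (x + y) = g x + g y) \<and> (\<forall>a x. g (sc a x) = sc a (g x))
           \<and> (\<forall>x. norm (g x) \<le> K * norm x) \<and> continuous_on UNIV g"
    by (rule extension[OF DA(1,2)]) (use Wadd Whom W in \<open>auto intro: linear_continuous_on bounded_linear_sc\<close>)
  then obtain B where B: "\<And>x. x \<in> DA \<Longrightarrow> B x = W x" "\<And>x y. B (x + y) = B x + B y"
      "\<And>a x. B (sc a x) = sc a (B x)" "\<And>x. norm (B x) \<le> K * norm x" by blast
  have Bop: "bounded_op sc B" unfolding bounded_op_def using B by blast
  have Bq: "ip a (B b) = q a b" if "a \<in> DA" "b \<in> DA" for a b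
    using W that B(1) by simp
  have P: "bounded_op sc B \<and> (\<forall>\<phi>\<in>DA. ip \<phi> (B \<phi>) = ip (A \<phi>) (S \<phi>) - ip \<phi> (S (A \<phi>)))"
    using Bop Bq by (simp add: q_def)
  have U: "B' = B" if P': "bounded_op sc B' \<and> (\<forall>\<phi>\<in>DA. ip \<phi> (B' \<phi>) = ip (A \<phi>) (S \<phi>) - ip \<phi> (S (A \<phi>)))" for B'
  proof -
    define p where "p a b = ip a (B' b) - ip a (B b)" for a b
    note B'D = bounded_opD[of B'] 
    have ps: "sesq DA p" using P' Bop
      unfolding sesq_def p_def by (auto simp: bounded_opD ip_addl ip_addr ip_scl ip_scr algebra_simps)
    have p0: "p a a = 0" if "a \<in> DA" for a using P' Bq[OF that that] that by (simp add: p_def q_def)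
    have eqD: "B' b = B b" if b: "b \<in> DA" for b
      by (rule uniq_rep[OF DA(2)]) (use polar_zero[OF ps DA(1) p0 _ b] in \<open>simp add: p_def\<close>)
    have "B' x = B x" for x
      by (rule dense_eq[OF DA(2)]) (use P' Bop eqD in \<open>auto intro: bounded_op_cont\<close>)
    then show ?thesis by auto
  qed
  have "commutator sc ip DA A S = B"
    unfolding commutator_def by (rule the_equality, rule P, erule U)
  then show ?thesis using Bop Bq by (simp add: q_def)
qed

end


lemma approx0:
  fixes f :: "'j \<Rightarrow> complex"
  assumes "\<And>e. e > 0 \<Longrightarrow> \<exists>g. (g \<longlongrightarrow> 0) F \<and> (\<forall>j. cmod (f j - g j) \<le> e)"
  shows "(f \<longlongrightarrow> 0) F"
proof (rule tendstoI)
  fix e :: real assume e: "e > 0"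
  obtain g where g: "(g \<longlongrightarrow> 0) F" "\<And>j. cmod (f j - g j) \<le> e / 2"
    using assms[of "e/2"] e by auto
  have "eventually (\<lambda>j. dist (g j) 0 < e / 2) F" using g(1) e by (intro tendstoD) auto
  then show "eventually (\<lambda>j. dist (f j) 0 < e) F"
  proof (rule eventually_mono)
    fix j assume "dist (g j) 0 < e / 2"
    then have "cmod (g j) < e / 2" by simp
    moreover have "cmod (f j) \<le> cmod (f j - g j) + cmod (g j)"
      using norm_triangle_ineq[of "f j - g j" "g j"] by simp
    ultimately show "dist (f j) 0 < e" using g(2)[of j] by simp
  qed
qed

lemma len_to_infinity:
  assumes tg: "topological_group G T" and pl: "proper_length G T len"
    and xc: "\<forall>j. x j \<in> carrier G" and div: "diverges_to_infinity T x F"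
  shows "filterlim (\<lambda>j. len (x j)) at_top F"
  unfolding filterlim_at_top
proof (rule allI, rule ccontr)
  fix M :: real
  assume "\<not> eventually (\<lambda>j. M \<le> len (x j)) F"
  then have fr: "\<exists>\<^sub>F j in F. len (x j) < M" by (simp add: not_eventually not_le)
  have top: "topspace T = carrier G" using tg by (simp add: topological_group_def)
  define C where "C = T closure_of {y\<in>carrier G. len y \<in> {0..M}}"
  have H: "\<forall>K. compact K \<and> K \<subseteq> {0..} \<longrightarrow> compactin T (T closure_of {x\<in>carrier G. len x \<in> K})"
    using pl by (simp add: proper_length_def)
  have cC: "compactin T C" unfolding C_def by (rule H[rule_format]) auto
  have sub: "{y\<in>carrier G. len y \<in> {0..M}} \<subseteq> C"
    unfolding C_def by (rule closure_of_subset) (auto simp: top)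
  have frC: "\<exists>\<^sub>F j in F. x j \<in> C"
    using fr by (rule frequently_elim1) (use xc pl sub in \<open>auto simp: proper_length_def\<close>)
  have "\<exists>p\<in>C. \<forall>V. openin T V \<and> p \<in> V \<longrightarrow> (\<exists>\<^sub>F j in F. x j \<in> V)"
  proof (rule ccontr)
    assume "\<not> ?thesis"
    then have cov: "\<forall>p\<in>C. \<exists>V. openin T V \<and> p \<in> V \<and> eventually (\<lambda>j. x j \<notin> V) F"
      by (auto simp: not_frequently)
    define \<U> where "\<U> = {V. openin T V \<and> eventually (\<lambda>j. x j \<notin> V) F}"
    have "C \<subseteq> \<Union>\<U>" using cov by (auto simp: \<U>_def)
    moreover have "\<forall>U\<in>\<U>. openin T U" by (auto simp: \<U>_def)
    ultimately obtain \<F> where \<F>: "finite \<F>" "\<F> \<subseteq> \<U>" "C \<subseteq> \<Union>\<F>"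
      using cC unfolding compactin_def by meson
    have "eventually (\<lambda>j. \<forall>V\<in>\<F>. x j \<notin> V) F"
      using \<F>(1,2) by (intro eventually_ball_finite) (auto simp: \<U>_def)
    then have "eventually (\<lambda>j. x j \<notin> C) F"
      by (rule eventually_mono) (use \<F>(3) in blast)
    with frC show False by (simp add: not_frequently[symmetric])
  qed
  then obtain p where "p \<in> C" "\<forall>V. openin T V \<and> p \<in> V \<longrightarrow> (\<exists>\<^sub>F j in F. x j \<in> V)" by blast
  moreover have "p \<in> topspace T" using cC \<open>p \<in> C\<close> by (auto simp: compactin_def)
  ultimately show False using div by (auto simp: diverges_to_infinity_def)
qed

context chilb begin

lemma unitary_facts:
  assumes "unitary_op sc ip T"
  shows "bounded_op sc T" "\<And>a b. ip (T a) (T b) = ip a b" "\<And>v. norm (T v) = norm v"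
    "\<And>v. inv_into UNIV T (T v) = v" "\<And>v. T (inv_into UNIV T v) = v"
    "\<And>a b. ip (inv_into UNIV T a) b = ip a (T b)" "bounded_op sc (inv_into UNIV T)"
proof -
  show bo: "bounded_op sc T" and ipp: "\<And>a b. ip (T a) (T b) = ip a b"
    using assms by (auto simp: unitary_op_def)
  have su: "surj T" using assms by (simp add: unitary_op_def)
  show nT: "\<And>v. norm (T v) = norm v"
  proof -
    fix v
    have "(norm (T v))\<^sup>2 = (norm v)\<^sup>2" using ipp[of v v] by (simp add: norm_sq)
    then show "norm (T v) = norm v" by (simp add: power2_eq_iff_nonneg)
  qed
  have inj: "inj T"
  proof (rule injI)
    fix a b assume "T a = T b"
    interpret bl: bounded_linear T by (rule bounded_op_bl[OF bo])
    from \<open>T a = T b\<close> have "T (a - b) = 0" by (simp add: bl.diff)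
    then show "a = b" using nT[of "a - b"] by simp
  qed
  show li: "\<And>v. inv_into UNIV T (T v) = v" using inj by simp
  show ri: "\<And>v. T (inv_into UNIV T v) = v" using su by (simp add: surj_f_inv_f)
  show "\<And>a b. ip (inv_into UNIV T a) b = ip a (T b)"
    by (metis ipp ri)
  show "bounded_op sc (inv_into UNIV T)"
    unfolding bounded_op_def
  proof (intro conjI allI exI)
    fix x y
    show "inv_into UNIV T (x + y) = inv_into UNIV T x + inv_into UNIV T y"
      by (rule injD[OF inj]) (simp add: ri bounded_opD[OF bo])
  next
    fix a x
    show "inv_into UNIV T (sc a x) = sc a (inv_into UNIV T x)"
      by (rule injD[OF inj]) (simp add: ri bounded_opD[OF bo])
  next
    fix x
    show "norm (inv_into UNIV T x) \<le> 1 * norm x" by (metis nT ri order_refl mult_1)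
  qed
qed

lemma bounded_linear_sc_left: "bounded_linear (\<lambda>a. sc a e)"
proof (rule bounded_linear_intro[where K="norm e"])
  show "sc (a + b) e = sc a e + sc b e" for a b by (rule sc_addl)
  show "sc (r *\<^sub>R a) e = r *\<^sub>R sc a e" for r a
    by (simp add: scaleR_conv_of_real sc_mult[symmetric] sc_real)
  show "norm (sc a e) \<le> norm a * norm e" for a by (simp add: norm_sc)
qed

lemma tendsto_sc_left: "(f \<longlongrightarrow> a) F \<Longrightarrow> ((\<lambda>j. sc (f j) e) \<longlongrightarrow> sc a e) F"
  by (rule bounded_linear.tendsto[OF bounded_linear_sc_left])

lemma cspan_csub:
  assumes "finite B" shows "csub (cspan sc B)"
  unfolding csub_def cspan_def
proof (intro conjI ballI allI)
  show "0 \<in> {y. \<exists>f. y = (\<Sum>b\<in>B. sc (f b) b)}" by (intro CollectI exI[of _ "\<lambda>_. 0"]) simp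
next
  fix x y assume "x \<in> {y. \<exists>f. y = (\<Sum>b\<in>B. sc (f b) b)}" "y \<in> {y. \<exists>f. y = (\<Sum>b\<in>B. sc (f b) b)}"
  then obtain f g where "x = (\<Sum>b\<in>B. sc (f b) b)" "y = (\<Sum>b\<in>B. sc (g b) b)" by auto
  then have "x + y = (\<Sum>b\<in>B. sc (f b + g b) b)" by (simp add: sc_addl sum.distrib)
  then show "x + y \<in> {y. \<exists>f. y = (\<Sum>b\<in>B. sc (f b) b)}" by (intro CollectI exI[of _ "\<lambda>b. f b + g b"])
next
  fix a x assume "x \<in> {y. \<exists>f. y = (\<Sum>b\<in>B. sc (f b) b)}"
  then obtain f where "x = (\<Sum>b\<in>B. sc (f b) b)" by auto
  then have "sc a x = (\<Sum>b\<in>B. sc (a * f b) b)" by (simp add: sc_sum sc_mult)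
  then show "sc a x \<in> {y. \<exists>f. y = (\<Sum>b\<in>B. sc (f b) b)}" by (intro CollectI exI[of _ "\<lambda>b. a * f b"])
qed

lemma csub_sum: "csub M \<Longrightarrow> (\<And>s. s \<in> S \<Longrightarrow> f s \<in> M) \<Longrightarrow> sum f S \<in> M"
  by (induction S rule: infinite_finite_induct) (auto simp: csub_def)

lemma cspan_sub: assumes "finite B" shows "B \<subseteq> cspan sc B"
proof
  fix b assume b: "b \<in> B"
  have "b = (\<Sum>c\<in>B. sc (if c = b then 1 else 0) c)"
    using assms b by (simp add: if_distrib[of "\<lambda>t. sc t _"] cong: if_cong)
  then show "b \<in> cspan sc B" unfolding cspan_def by (intro CollectI exI[of _ "\<lambda>c. if c = b then 1 else 0"])
qed

lemma cspan_min: assumes "csub M" "B \<subseteq> M" shows "cspan sc B \<subseteq> M"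
proof
  fix y assume "y \<in> cspan sc B"
  then obtain f where "y = (\<Sum>b\<in>B. sc (f b) b)" by (auto simp: cspan_def)
  then show "y \<in> M" using assms by (auto intro!: csub_sum simp: csub_def)
qed

definition orthonormal :: "'h set \<Rightarrow> bool" where
  "orthonormal E \<longleftrightarrow> (\<forall>e\<in>E. \<forall>e'\<in>E. ip e e' = (if e = e' then 1 else 0))"

lemma orthonormal_rep:
  assumes E: "finite E" "orthonormal E" and u: "u \<in> cspan sc E"
  shows "u = (\<Sum>e\<in>E. sc (ip e u) e)"
proof -
  obtain c where c: "u = (\<Sum>e\<in>E. sc (c e) e)" using u by (auto simp: cspan_def)
  have "ip e0 u = c e0" if "e0 \<in> E" for e0
  proof -
    have "ip e0 u = (\<Sum>e\<in>E. c e * ip e0 e)" by (simp add: c ip_sum_r ip_scr)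
    also have "\<dots> = (\<Sum>e\<in>E. if e = e0 then c e else 0)"
      using E(2) that by (intro sum.cong) (auto simp: orthonormal_def)
    also have "\<dots> = c e0" using E(1) that by simp
    finally show ?thesis .
  qed
  then show ?thesis by (simp add: c cong: sum.cong)
qed

lemma gram_schmidt:
  assumes "finite B"
  shows "\<exists>E. finite E \<and> orthonormal E \<and> E \<subseteq> cspan sc B \<and> B \<subseteq> cspan sc E"
  using assms
proof (induction B rule: finite_induct)
  case empty
  show ?case by (intro exI[of _ "{}"]) (auto simp: orthonormal_def cspan_def)
next
  case (insert b B)
  then obtain E where E: "finite E" "orthonormal E" "E \<subseteq> cspan sc B" "B \<subseteq> cspan sc E" by blast
  have fB: "finite (insert b B)" using insert by simp
  have csI: "csub (cspan sc (insert b B))" by (rule cspan_csub[OF fB])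
  have BI: "cspan sc B \<subseteq> cspan sc (insert b B)"
    by (rule cspan_min[OF csI]) (use cspan_sub[OF fB] in auto)
  have bI: "b \<in> cspan sc (insert b B)" using cspan_sub[OF fB] by auto
  define w where "w = b - (\<Sum>e\<in>E. sc (ip e b) e)"
  have wI: "w \<in> cspan sc (insert b B)" unfolding w_def
    using csI bI E(3) BI by (auto intro!: csub_diff csub_sum simp: csub_def)
  have wperp: "ip e w = 0" if "e \<in> E" for e
  proof -
    have "ip e w = ip e b - (\<Sum>e'\<in>E. ip e' b * ip e e')"
      by (simp add: w_def ip_diff_r ip_sum_r ip_scr)
    also have "(\<Sum>e'\<in>E. ip e' b * ip e e') = (\<Sum>e'\<in>E. if e' = e then ip e' b else 0)"
      using E(2) that by (intro sum.cong) (auto simp: orthonormal_def)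
    also have "\<dots> = ip e b" using E(1) that by simp
    finally show ?thesis by simp
  qed
  have csE: "csub (cspan sc E')" if "finite E'" for E' by (rule cspan_csub[OF that])
  show ?case
  proof (cases "w = 0")
    case True
    have "b \<in> cspan sc E"
    proof -
      have "b = (\<Sum>e\<in>E. sc (ip e b) e)" using True by (simp add: w_def)
      then show ?thesis unfolding cspan_def by (intro CollectI exI[of _ "\<lambda>e. ip e b"])
    qed
    then show ?thesis using E BI by (intro exI[of _ E]) auto
  next
    case False
    define e' where "e' = sc (of_real (1 / norm w)) w"
    have nw: "norm w > 0" using False by simp
    have ne': "norm e' = 1" using nw by (simp add: e'_def norm_sc norm_divide)
    have e'E: "ip e e' = 0" if "e \<in> E" for e using wperp[OF that] by (simp add: e'_def ip_scr)
    have e'nE: "e' \<notin> E"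
    proof
      assume "e' \<in> E"
      then have "ip e' e' = 0" by (rule e'E)
      then show False using ne' by (simp add: ip_self)
    qed
    define E' where "E' = insert e' E"
    have fE': "finite E'" using E(1) by (simp add: E'_def)
    have on: "orthonormal E'"
      unfolding orthonormal_def E'_def
    proof (intro ballI)
      fix u v assume u: "u \<in> insert e' E" and v: "v \<in> insert e' E"
      show "ip u v = (if u = v then 1 else 0)"
      proof (cases "u = e'")
        case True
        then show ?thesis
        proof (cases "v = e'")
          case True then show ?thesis using \<open>u = e'\<close> ne' by (simp add: ip_self)
        next
          case False then have "v \<in> E" using v by auto
          then show ?thesis using e'E[of v] \<open>u = e'\<close> False by (simp add: ip_sym[of e' v])
        qed
      next
        case False then have uE: "u \<in> E" using u by auto
        show ?thesis
        proof (cases "v = e'")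
          case True then show ?thesis using e'E[OF uE] e'nE uE by auto
        next
          case False then have "v \<in> E" using v by auto
          then show ?thesis using E(2) uE by (simp add: orthonormal_def)
        qed
      qed
    qed
    have e'I: "e' \<in> cspan sc (insert b B)" using wI csI by (simp add: e'_def csub_def)
    have "b \<in> cspan sc E'"
    proof -
      have "w = sc (of_real (norm w)) e'" using nw by (simp add: e'_def sc_mult flip: of_real_mult)
      then have "b = sc (of_real (norm w)) e' + (\<Sum>e\<in>E. sc (ip e b) e)" by (simp add: w_def)
      moreover have "(\<Sum>e\<in>E. sc (ip e b) e) \<in> cspan sc E'"
        by (rule csub_sum[OF csE[OF fE']]) (use csE[OF fE'] cspan_sub[OF fE'] in \<open>auto simp: csub_def E'_def\<close>)
      moreover have "sc (of_real (norm w)) e' \<in> cspan sc E'"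
        using csE[OF fE'] cspan_sub[OF fE'] by (auto simp: csub_def E'_def)
      ultimately show ?thesis using csE[OF fE'] unfolding csub_def by metis
    qed
    moreover have "B \<subseteq> cspan sc E'"
      using E(4) cspan_min[OF csE[OF fE'], of E] cspan_sub[OF fE'] by (auto simp: E'_def)
    moreover have "E' \<subseteq> cspan sc (insert b B)" using E(3) BI e'I by (auto simp: E'_def)
    ultimately show ?thesis using fE' on by (intro exI[of _ E']) auto
  qed
qed

end


lemma (in chilb) bounded_op_diff: "bounded_op sc T \<Longrightarrow> T (a - b) = T a - T b"
  by (metis bounded_opD(1) diff_add_cancel add_diff_cancel)

theorem theorem2p3:
  fixes G :: "('g, 'b) monoid_scheme" and T :: "'g topology" and len :: "'g \<Rightarrow> real"
    and sc :: "complex \<Rightarrow> 'h::banach \<Rightarrow> 'h" and ip :: "'h \<Rightarrow> 'h \<Rightarrow> complex"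
    and U :: "'g \<Rightarrow> 'h \<Rightarrow> 'h" and x :: "'j \<Rightarrow> 'g" and F :: "'j filter"
    and DA :: "'h set" and A :: "'h \<Rightarrow> 'h" and D :: "'h \<Rightarrow> 'h"
  assumes "topological_group G T"
    and "proper_length G T len"
    and "complex_hilbert sc ip"
    and "unitary_rep G T sc ip U"
    and "F \<noteq> bot" and "\<forall>j. x j \<in> carrier G"
    and "diverges_to_infinity T x F"
    and "self_adjoint sc ip DA A"
    and "\<forall>j. in_C1 sc ip DA A (U (x j))"
    and "\<forall>\<psi>. ((\<lambda>j. (1 / len (x j)) *\<^sub>R
                 commutator sc ip DA A (U (x j)) (inv_into UNIV (U (x j)) \<psi>)) \<longlongrightarrow> D \<psi>) F"
  shows "(\<forall>\<phi>\<in>kernel_perp ip D. \<forall>\<psi>. ((\<lambda>j. ip \<phi> (U (x j) \<psi>)) \<longlongrightarrow> 0) F)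
     \<and> \<not> (\<exists>B. finite B \<and> cspan sc B \<subseteq> kernel_perp ip D \<and> cspan sc B \<noteq> {0}
             \<and> (\<forall>y\<in>carrier G. U y ` cspan sc B \<subseteq> cspan sc B))"
proof -
  interpret chilb sc ip by (rule chilb.intro) (rule assms(3))
  note SA = self_adjointD[OF assms(8)]
  define Uj where "Uj j = U (x j)" for j
  define Ui where "Ui j = inv_into UNIV (Uj j)" for j
  define Bj where "Bj j = commutator sc ip DA A (Uj j)" for j
  define L where "L j = len (x j)" for j
  define Dj where "Dj j v = (1 / L j) *\<^sub>R Bj j (Ui j v)" for j v
  have unit: "unitary_op sc ip (Uj j)" for j
    using assms(4,6) by (simp add: unitary_rep_def Uj_def)
  note uf = unitary_facts[OF unit]
  have Dlim: "((\<lambda>j. Dj j \<psi>) \<longlongrightarrow> D \<psi>) F" for \<psi>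
    using assms(10) by (simp add: Dj_def Ui_def Bj_def Uj_def L_def)
  have comm: "bounded_op sc (Bj j) \<and> (\<forall>a\<in>DA. \<forall>b\<in>DA. ip a (Bj j b) = ip (A a) (Uj j b) - ip a (Uj j (A b)))" for j
    unfolding Bj_def by (rule commutator_exists[OF assms(8)]) (use assms(9) in \<open>simp add: Uj_def\<close>)
  have UDA: "Uj j b \<in> DA" if "b \<in> DA" for j b
  proof -
    have "\<forall>y\<in>DA. ip (A y) (Uj j b) = ip y (Uj j (A b) + Bj j b)"
      using comm[of j] that by (auto simp: ip_addr)
    then show ?thesis using SA(5) by blast
  qed
  have Mcont: "continuous_on UNIV (\<lambda>v. Bj j (Ui j v))" for j
    using bounded_op_cont[OF conjunct1[OF comm[of j]]] bounded_op_cont[OF uf(7)[of j]]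
    by (auto simp: Ui_def intro: continuous_on_compose2)
  have Msym_dense: "ip (Bj j (Ui j v)) w = ip v (Bj j (Ui j w))" if "v \<in> Uj j ` DA" "w \<in> Uj j ` DA" for j v w
  proof -
    from that(1) obtain a where a: "a \<in> DA" "v = Uj j a" by (rule imageE) auto
    from that(2) obtain b where b: "b \<in> DA" "w = Uj j b" by (rule imageE) auto
    have "ip (Bj j a) (Uj j b) = cnj (ip (Uj j b) (Bj j a))" by (rule ip_sym)
    also have "ip (Uj j b) (Bj j a) = ip (A (Uj j b)) (Uj j a) - ip b (A a)"
      using comm[of j] UDA a b uf(2) by simp
    also have "cnj (ip (A (Uj j b)) (Uj j a) - ip b (A a)) = ip (Uj j a) (A (Uj j b)) - ip (A a) b"
      by (simp add: ip_sym[of "Uj j a"] ip_sym[of "A a"])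
    also have "ip (Uj j a) (A (Uj j b)) = ip (A (Uj j a)) (Uj j b)"
      using SA(6) UDA a b by simp
    also have "ip (A a) b = ip a (A b)" using SA(6) a b by simp
    also have "ip (A (Uj j a)) (Uj j b) - ip a (A b) = ip (Uj j a) (Bj j b)"
      using comm[of j] UDA a b uf(2) by simp
    finally show ?thesis using a b by (simp add: Ui_def uf(4))
  qed
  have Udense: "closure (Uj j ` DA) = UNIV" for j
  proof -
    have "Uj j ` closure DA \<subseteq> closure (Uj j ` DA)"
      by (rule continuous_image_closure_subset[OF bounded_op_cont[OF uf(1)]]) simp
    moreover have "Uj j ` UNIV = UNIV" using uf(5) by (metis surjI surj_def)
    ultimately show ?thesis using SA(2) by auto
  qed
  have Msym: "ip (Bj j (Ui j v)) w = ip v (Bj j (Ui j w))" for j v w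
  proof -
    have 1: "ip (Bj j (Ui j v)) w = ip v (Bj j (Ui j w))" if "w \<in> Uj j ` DA" for v w
      by (rule dense_eq[OF Udense, where f = "\<lambda>v. ip (Bj j (Ui j v)) w" and g = "\<lambda>v. ip v (Bj j (Ui j w))"])
        (use Msym_dense that in \<open>auto intro!: continuous_on_ip continuous_intros Mcont\<close>)
    show ?thesis
      by (rule dense_eq[OF Udense, where f = "\<lambda>w. ip (Bj j (Ui j v)) w" and g = "\<lambda>w. ip v (Bj j (Ui j w))"])
        (use 1 in \<open>auto intro!: continuous_on_ip continuous_intros Mcont\<close>)
  qed
  have Dsym_j: "ip (Dj j v) w = ip v (Dj j w)" for j v w
    by (simp add: Dj_def ip_scaleR_l ip_scaleR_r Msym)
  have Dsym: "ip (D v) w = ip v (D w)" for v w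
  proof -
    have "((\<lambda>j. ip (Dj j v) w) \<longlongrightarrow> ip (D v) w) F" by (intro tendsto_ip Dlim tendsto_const)
    moreover have "((\<lambda>j. ip (Dj j v) w) \<longlongrightarrow> ip v (D w)) F"
      unfolding Dsym_j by (intro tendsto_ip Dlim tendsto_const)
    ultimately show ?thesis using assms(5) tendsto_unique by blast
  qed
  have Linf: "filterlim L at_top F" unfolding L_def by (rule len_to_infinity[OF assms(1,2,6,7)])
  have invL: "((\<lambda>j. 1 / L j) \<longlongrightarrow> 0) F" using tendsto_inverse_0_at_top[OF Linf] by (simp add: inverse_eq_divide)
  have key: "((\<lambda>j. ip (Dj j \<phi>) (Uj j \<psi>)) \<longlongrightarrow> 0) F" if "\<phi> \<in> DA" "\<psi> \<in> DA" for \<phi> \<psi>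
  proof -
    have eq: "ip (Dj j \<phi>) (Uj j \<psi>) = complex_of_real (1 / L j) * (ip (A \<phi>) (Uj j \<psi>) - ip \<phi> (Uj j (A \<psi>)))" for j
    proof -
      have "ip (Dj j \<phi>) (Uj j \<psi>) = ip \<phi> (Dj j (Uj j \<psi>))" by (rule Dsym_j)
      also have "\<dots> = (1 / L j) *\<^sub>R ip \<phi> (Bj j \<psi>)" by (simp add: Dj_def Ui_def uf(4) ip_scaleR_r)
      also have "ip \<phi> (Bj j \<psi>) = ip (A \<phi>) (Uj j \<psi>) - ip \<phi> (Uj j (A \<psi>))" using comm[of j] that by simp
      finally show ?thesis by (simp add: scaleR_conv_of_real)
    qed
    define C where "C = norm (A \<phi>) * norm \<psi> + norm \<phi> * norm (A \<psi>)"
    have bnd: "cmod (ip (A \<phi>) (Uj j \<psi>) - ip \<phi> (Uj j (A \<psi>))) \<le> C" for j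
    proof -
      have "cmod (ip (A \<phi>) (Uj j \<psi>) - ip \<phi> (Uj j (A \<psi>))) \<le> cmod (ip (A \<phi>) (Uj j \<psi>)) + cmod (ip \<phi> (Uj j (A \<psi>)))"
        by (rule norm_triangle_ineq4)
      also have "\<dots> \<le> norm (A \<phi>) * norm (Uj j \<psi>) + norm \<phi> * norm (Uj j (A \<psi>))"
        by (intro add_mono cauchy_schwarz)
      finally show ?thesis by (simp add: C_def uf(3))
    qed
    show ?thesis unfolding eq
    proof (rule Lim_null_comparison)
      show "eventually (\<lambda>j. norm (complex_of_real (1 / L j) * (ip (A \<phi>) (Uj j \<psi>) - ip \<phi> (Uj j (A \<psi>)))) \<le> \<bar>1 / L j\<bar> * C) F"
      proof (intro always_eventually allI)
        fix j
        have "norm (complex_of_real (1 / L j) * (ip (A \<phi>) (Uj j \<psi>) - ip \<phi> (Uj j (A \<psi>))))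
            = \<bar>1 / L j\<bar> * cmod (ip (A \<phi>) (Uj j \<psi>) - ip \<phi> (Uj j (A \<psi>)))"
          by (simp only: norm_mult norm_of_real)
        also have "\<dots> \<le> \<bar>1 / L j\<bar> * C" by (rule mult_left_mono[OF bnd]) simp
        finally show "norm (complex_of_real (1 / L j) * (ip (A \<phi>) (Uj j \<psi>) - ip \<phi> (Uj j (A \<psi>)))) \<le> \<bar>1 / L j\<bar> * C" .
      qed
      show "((\<lambda>j. \<bar>1 / L j\<bar> * C) \<longlongrightarrow> 0) F"
        by (intro tendsto_mult_left_zero tendsto_rabs_zero invL)
    qed
  qed
  have DinS0: "((\<lambda>j. ip (D \<phi>) (Uj j \<psi>)) \<longlongrightarrow> 0) F" if "\<phi> \<in> DA" "\<psi> \<in> DA" for \<phi> \<psi>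
  proof -
    have "((\<lambda>j. ip (D \<phi> - Dj j \<phi>) (Uj j \<psi>)) \<longlongrightarrow> 0) F"
    proof (rule Lim_null_comparison)
      show "eventually (\<lambda>j. norm (ip (D \<phi> - Dj j \<phi>) (Uj j \<psi>)) \<le> norm (D \<phi> - Dj j \<phi>) * norm \<psi>) F"
        by (intro always_eventually allI) (metis cauchy_schwarz uf(3))
      have "((\<lambda>j. D \<phi> - Dj j \<phi>) \<longlongrightarrow> D \<phi> - D \<phi>) F" by (intro tendsto_diff tendsto_const Dlim)
      then have "((\<lambda>j. D \<phi> - Dj j \<phi>) \<longlongrightarrow> 0) F" by simp
      then show "((\<lambda>j. norm (D \<phi> - Dj j \<phi>) * norm \<psi>) \<longlongrightarrow> 0) F"
        by (intro tendsto_mult_left_zero tendsto_norm_zero)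
    qed
    from tendsto_add_zero[OF this key[OF that]] show ?thesis by (simp add: ip_diff_l)
  qed
  define S where "S = {u. \<forall>\<psi>. ((\<lambda>j. ip u (Uj j \<psi>)) \<longlongrightarrow> 0) F}"
  have Ubnd: "cmod (ip u (Uj j a) - ip u (Uj j b)) \<le> norm u * norm (a - b)" for u j a b
  proof -
    have "ip u (Uj j a) - ip u (Uj j b) = ip u (Uj j (a - b))"
      by (simp add: ip_diff_r bounded_op_diff[OF uf(1)])
    then show ?thesis using cauchy_schwarz[of u "Uj j (a - b)"] by (simp add: uf(3))
  qed
  have DS: "D \<phi> \<in> S" if \<phi>: "\<phi> \<in> DA" for \<phi>
    unfolding S_def
  proof (intro CollectI allI approx0)
    fix \<psi> and e :: real assume e: "e > 0"
    define u where "u = D \<phi>"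
    have "\<psi> \<in> closure DA" using SA(2) by simp
    moreover have "e / (norm u + 1) > 0" using e by (simp add: add_nonneg_pos)
    ultimately obtain \<psi>' where \<psi>': "\<psi>' \<in> DA" "dist \<psi>' \<psi> < e / (norm u + 1)"
      using closure_approachable by blast
    show "\<exists>g. (g \<longlongrightarrow> 0) F \<and> (\<forall>j. cmod (ip (D \<phi>) (Uj j \<psi>) - g j) \<le> e)"
    proof (intro exI conjI allI)
      show "((\<lambda>j. ip (D \<phi>) (Uj j \<psi>')) \<longlongrightarrow> 0) F" by (rule DinS0[OF \<phi> \<psi>'(1)])
      fix j
      have "cmod (ip u (Uj j \<psi>) - ip u (Uj j \<psi>')) \<le> norm u * norm (\<psi> - \<psi>')" by (rule Ubnd)
      also have "\<dots> \<le> (norm u + 1) * (e / (norm u + 1))"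
        using \<psi>'(2) by (intro mult_mono) (auto simp: dist_norm norm_minus_commute)
      also have "\<dots> = e" using add_nonneg_pos[OF norm_ge_zero[of u] zero_less_one] by simp
      finally show "cmod (ip (D \<phi>) (Uj j \<psi>) - ip (D \<phi>) (Uj j \<psi>')) \<le> e" by (simp add: u_def)
    qed
  qed
  have Sclosed: "closed S"
  proof -
    have "closure S \<subseteq> S"
    proof
      fix u assume "u \<in> closure S"
      then have ap: "\<forall>e>0. \<exists>y\<in>S. dist y u < e" by (simp add: closure_approachable)
      show "u \<in> S" unfolding S_def
      proof (intro CollectI allI approx0)
        fix \<psi> :: 'h and e :: real assume e: "e > 0"
        have "e / (norm \<psi> + 1) > 0" using e by (simp add: add_nonneg_pos)
        then obtain y where y: "y \<in> S" "dist y u < e / (norm \<psi> + 1)" using ap by blast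
        show "\<exists>g. (g \<longlongrightarrow> 0) F \<and> (\<forall>j. cmod (ip u (Uj j \<psi>) - g j) \<le> e)"
        proof (intro exI conjI allI)
          show "((\<lambda>j. ip y (Uj j \<psi>)) \<longlongrightarrow> 0) F" using y(1) by (simp add: S_def)
          fix j
          have "ip u (Uj j \<psi>) - ip y (Uj j \<psi>) = ip (u - y) (Uj j \<psi>)" by (simp add: ip_diff_l)
          then have "cmod (ip u (Uj j \<psi>) - ip y (Uj j \<psi>)) \<le> norm (u - y) * norm \<psi>"
            using cauchy_schwarz[of "u - y" "Uj j \<psi>"] by (simp add: uf(3))
          also have "\<dots> \<le> (e / (norm \<psi> + 1)) * (norm \<psi> + 1)"
            using y(2) \<open>e / (norm \<psi> + 1) > 0\<close> by (intro mult_mono) (auto simp: dist_norm norm_minus_commute)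
          also have "\<dots> = e" using add_nonneg_pos[OF norm_ge_zero[of \<psi>] zero_less_one] by simp
          finally show "cmod (ip u (Uj j \<psi>) - ip y (Uj j \<psi>)) \<le> e" .
        qed
      qed
    qed
    then show ?thesis using closure_subset_eq by blast
  qed
  have Scsub: "csub S" unfolding csub_def S_def
    by (auto simp: ip_addl ip_scl intro!: tendsto_add_zero tendsto_mult_right_zero)
  have partA: "\<forall>\<phi>\<in>kernel_perp ip D. \<forall>\<psi>. ((\<lambda>j. ip \<phi> (U (x j) \<psi>)) \<longlongrightarrow> 0) F"
  proof (intro ballI allI)
    fix \<phi> \<psi> assume \<phi>: "\<phi> \<in> kernel_perp ip D"
    obtain s where s: "s \<in> S" "\<And>u. u \<in> S \<Longrightarrow> ip u (\<phi> - s) = 0"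
      using projection[OF Scsub Sclosed, of \<phi>] by blast
    define r where "r = \<phi> - s"
    have "D r = 0"
    proof (rule uniq_rep[OF SA(2)])
      fix a assume a: "a \<in> DA"
      have "ip (D a) r = 0" using s(2)[OF DS[OF a]] by (simp add: r_def)
      then show "ip a (D r) = ip a 0" using Dsym by simp
    qed
    then have "ip r \<phi> = 0" using \<phi> by (simp add: kernel_perp_def)
    moreover have "ip r s = 0" using s(2)[OF s(1)] ip_sym[of r s] by (simp add: r_def)
    moreover have "ip r (r + s) = ip r r + ip r s" by (rule ip_addr)
    moreover have "r + s = \<phi>" by (simp add: r_def)
    ultimately have "ip r r = 0" by simp
    then have "r = 0" by (simp add: ip_self_eq_0)
    then have "\<phi> \<in> S" using s(1) by (simp add: r_def)
    then show "((\<lambda>j. ip \<phi> (U (x j) \<psi>)) \<longlongrightarrow> 0) F" by (simp add: S_def Uj_def)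
  qed
  have partB: "\<not> (\<exists>B. finite B \<and> cspan sc B \<subseteq> kernel_perp ip D \<and> cspan sc B \<noteq> {0}
             \<and> (\<forall>y\<in>carrier G. U y ` cspan sc B \<subseteq> cspan sc B))"
  proof
    assume "\<exists>B. finite B \<and> cspan sc B \<subseteq> kernel_perp ip D \<and> cspan sc B \<noteq> {0}
             \<and> (\<forall>y\<in>carrier G. U y ` cspan sc B \<subseteq> cspan sc B)"
    then obtain B where B: "finite B" "cspan sc B \<subseteq> kernel_perp ip D" "cspan sc B \<noteq> {0}"
      "\<forall>y\<in>carrier G. U y ` cspan sc B \<subseteq> cspan sc B" by blast
    obtain E where E: "finite E" "orthonormal E" "E \<subseteq> cspan sc B" "B \<subseteq> cspan sc E"
      using gram_schmidt[OF B(1)] by blast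
    have csE: "cspan sc B \<subseteq> cspan sc E" by (rule cspan_min[OF cspan_csub[OF E(1)] E(4)])
    obtain \<psi> where \<psi>: "\<psi> \<in> cspan sc B" "\<psi> \<noteq> 0"
      using B(3) cspan_csub[OF B(1)] by (auto simp: csub_def)
    define v where "v j = U (x j) \<psi>" for j
    have vB: "v j \<in> cspan sc B" for j using B(4) assms(6) \<psi>(1) by (auto simp: v_def)
    have rep: "(\<lambda>j. \<Sum>e\<in>E. sc (ip e (v j)) e) = v"
    proof
      fix j
      have "v j \<in> cspan sc E" using csE vB by blast
      from orthonormal_rep[OF E(1,2) this] show "(\<Sum>e\<in>E. sc (ip e (v j)) e) = v j" by simp
    qed
    have "((\<lambda>j. \<Sum>e\<in>E. sc (ip e (v j)) e) \<longlongrightarrow> (\<Sum>e\<in>E. sc 0 e)) F"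
      by (intro tendsto_sum tendsto_sc_left) (use partA E(3) B(2) in \<open>auto simp: v_def\<close>)
    then have "(v \<longlongrightarrow> 0) F" unfolding rep by simp
    then have "((\<lambda>j. norm (v j)) \<longlongrightarrow> 0) F" by (rule tendsto_norm_zero)
    moreover have "norm (v j) = norm \<psi>" for j using uf(3) by (simp add: v_def Uj_def)
    ultimately have "((\<lambda>j. norm \<psi>) \<longlongrightarrow> 0) F" by simp
    then have "norm \<psi> = 0" using tendsto_unique[OF assms(5) tendsto_const] by blast
    with \<psi>(2) show False by simp
  qed
  show ?thesis using partA partB by blast
qed


end
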